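(* Let $G$ be a connected graph of order $n$, minimum degree $\delta\geq 3$ and maximum degree $\Delta$ that does not contain $C_4$ as a subgraph. Define $\varepsilon_\Delta=\Delta\delta-2\lfloor \Delta/2\rfloor+1$, $\varepsilon_\delta=\delta^2-2\lfloor\delta/2\rfloor+1$, and $N=n-\varepsilon_\Delta+\varepsilon_\delta$. Then \[ \mu(G)\leq \frac{5}{3}\cdot\frac{N(N-1)}{n(n-1)}\cdot\frac{n+2\varepsilon_\Delta}{\varepsilon_\delta}+8 . \]
   Context: For a connected graph $G$ of order $n\ge2$, $W(G)=\sum_{\{u,v\}\subseteq V(G)} d_G(u,v)$ is the Wiener index (sum of shortest-path distances over unordered pairs of distinct vertices) and $\mu(G)=\binom{n}{2}^{-1}W(G)$ is the average distance. $C_4$ is the cycle on four vertices; "not containing $C_4$ as a subgraph" refers to any (not necessarily induced) subgraph. *)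

theory Defs
  imports Complex_Main
begin

definition simple_graph :: "'a set \<Rightarrow> ('a \<Rightarrow> 'a \<Rightarrow> bool) \<Rightarrow> bool" where
  "simple_graph V E \<longleftrightarrow> finite V \<and> (\<forall>u v. E u v \<longrightarrow> u \<in> V \<and> v \<in> V) \<and>
     (\<forall>u v. E u v \<longrightarrow> E v u) \<and> (\<forall>v. \<not> E v v)"

text \<open>A walk is a nonempty list of vertices, consecutive ones adjacent.
Its length (number of edges) is length - 1.\<close>

definition is_walk :: "'a set \<Rightarrow> ('a \<Rightarrow> 'a \<Rightarrow> bool) \<Rightarrow> 'a list \<Rightarrow> bool" where
  "is_walk V E p \<longleftrightarrow> p \<noteq> [] \<and> set p \<subseteq> V \<and>
     (\<forall>i. Suc i < length p \<longrightarrow> E (p ! i) (p ! Suc i))"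

definition walk_betw :: "'a set \<Rightarrow> ('a \<Rightarrow> 'a \<Rightarrow> bool) \<Rightarrow> 'a \<Rightarrow> 'a list \<Rightarrow> 'a \<Rightarrow> bool" where
  "walk_betw V E u p v \<longleftrightarrow> is_walk V E p \<and> hd p = u \<and> last p = v"

definition connected_graph :: "'a set \<Rightarrow> ('a \<Rightarrow> 'a \<Rightarrow> bool) \<Rightarrow> bool" where
  "connected_graph V E \<longleftrightarrow> (\<forall>u\<in>V. \<forall>v\<in>V. \<exists>p. walk_betw V E u p v)"

text \<open>Shortest-path distance (only meaningful for connected vertices).\<close>

definition dist :: "'a set \<Rightarrow> ('a \<Rightarrow> 'a \<Rightarrow> bool) \<Rightarrow> 'a \<Rightarrow> 'a \<Rightarrow> nat" where
  "dist V E u v = (LEAST k. \<exists>p. walk_betw V E u p v \<and> length p = Suc k)"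

definition degree :: "'a set \<Rightarrow> ('a \<Rightarrow> 'a \<Rightarrow> bool) \<Rightarrow> 'a \<Rightarrow> nat" where
  "degree V E v = card {u \<in> V. E v u}"

definition min_degree :: "'a set \<Rightarrow> ('a \<Rightarrow> 'a \<Rightarrow> bool) \<Rightarrow> nat" where
  "min_degree V E = Min (degree V E ` V)"

definition max_degree :: "'a set \<Rightarrow> ('a \<Rightarrow> 'a \<Rightarrow> bool) \<Rightarrow> nat" where
  "max_degree V E = Max (degree V E ` V)"

definition contains_C4 :: "'a set \<Rightarrow> ('a \<Rightarrow> 'a \<Rightarrow> bool) \<Rightarrow> bool" where
  "contains_C4 V E \<longleftrightarrow> (\<exists>a\<in>V. \<exists>b\<in>V. \<exists>c\<in>V. \<exists>d\<in>V. distinct [a, b, c, d] \<and>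
      E a b \<and> E b c \<and> E c d \<and> E d a)"

text \<open>Wiener index: sum over unordered pairs of distinct vertices; since
the distance is symmetric, this is half the sum over ordered pairs.\<close>

definition wiener :: "'a set \<Rightarrow> ('a \<Rightarrow> 'a \<Rightarrow> bool) \<Rightarrow> real" where
  "wiener V E = (\<Sum>(u, v)\<in>{(u, v). u \<in> V \<and> v \<in> V \<and> u \<noteq> v}. real (dist V E u v)) / 2"

definition avg_dist :: "'a set \<Rightarrow> ('a \<Rightarrow> 'a \<Rightarrow> bool) \<Rightarrow> real" where
  "avg_dist V E = wiener V E / real (card V choose 2)"

end

theory Submission
  imports Defs
begin

lemma walk_single: "v \<in> V \<Longrightarrow> is_walk V E [v]"
  by (simp add: is_walk_def)

lemma walk_append_edge:
  assumes "is_walk V E p" "E (last p) v" "v \<in> V"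
  shows "is_walk V E (p @ [v])"
  unfolding is_walk_def
proof (intro conjI allI impI)
  show "p @ [v] \<noteq> []" by simp
  show "set (p @ [v]) \<subseteq> V" using assms unfolding is_walk_def by auto
next
  fix i assume i: "Suc i < length (p @ [v])"
  have pne: "p \<noteq> []" using assms(1) is_walk_def by auto
  show "E ((p @ [v]) ! i) ((p @ [v]) ! Suc i)"
  proof (cases "Suc i < length p")
    case True
    then show ?thesis using assms(1) unfolding is_walk_def by (simp add: nth_append)
  next
    case False
    then have "Suc i = length p" using i by simp
    then have "i = length p - 1" by simp
    then show ?thesis using assms(2) pne \<open>Suc i = length p\<close> by (simp add: nth_append last_conv_nth)
  qed
qed

lemma walk_take: "is_walk V E p \<Longrightarrow> 0 < t \<Longrightarrow> is_walk V E (take t p)"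
  unfolding is_walk_def by (auto dest: in_set_takeD)

lemma walk_drop: "is_walk V E p \<Longrightarrow> t < length p \<Longrightarrow> is_walk V E (drop t p)"
  unfolding is_walk_def by (auto dest: in_set_dropD)

lemma walk_concat:
  assumes "is_walk V E p" "is_walk V E q" "last p = hd q"
  shows "is_walk V E (p @ tl q)"
  unfolding is_walk_def
proof (intro conjI allI impI)
  show "p @ tl q \<noteq> []" using assms(1) is_walk_def by auto
  show "set (p @ tl q) \<subseteq> V" using assms unfolding is_walk_def by (auto dest: list.set_sel(2))
next
  fix i assume i: "Suc i < length (p @ tl q)"
  have pne: "p \<noteq> []" and qne: "q \<noteq> []" using assms is_walk_def by auto
  show "E ((p @ tl q) ! i) ((p @ tl q) ! Suc i)"
  proof (cases "Suc i < length p")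
    case True
    then show ?thesis using assms(1) unfolding is_walk_def by (simp add: nth_append)
  next
    case False
    then have ge: "length p \<le> Suc i" by simp
    define j where "j = Suc i - length p"
    have qj: "Suc j < length q" using i ge qne unfolding j_def by auto
    have e: "E (q ! j) (q ! Suc j)" using assms(2) qj unfolding is_walk_def by auto
    have r: "(p @ tl q) ! Suc i = q ! Suc j" using ge qne unfolding j_def
      by (cases q) (auto simp add: nth_append Suc_diff_le)
    have l: "(p @ tl q) ! i = q ! j"
    proof (cases "Suc i = length p")
      case True
      then have "i = length p - 1" by simp
      then have "(p @ tl q) ! i = last p" using pne by (simp add: nth_append last_conv_nth)
      also have "\<dots> = q ! 0" using assms(3) qne by (simp add: hd_conv_nth)
      finally show ?thesis using True unfolding j_def by simp
    next
      case False
      then have "length p \<le> i" using ge by simp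
      then show ?thesis using qne unfolding j_def by (cases q) (auto simp add: nth_append Suc_diff_le)
    qed
    show ?thesis using e l r by simp
  qed
qed

lemma walk_rev:
  assumes "is_walk V E p" "\<And>u v. E u v \<Longrightarrow> E v u"
  shows "is_walk V E (rev p)"
  unfolding is_walk_def
proof (intro conjI allI impI)
  show "rev p \<noteq> []" "set (rev p) \<subseteq> V" using assms(1) unfolding is_walk_def by auto
next
  fix i assume i: "Suc i < length (rev p)"
  let ?j = "length p - Suc (Suc i)"
  have "Suc ?j < length p" using i by simp
  then have "E (p ! ?j) (p ! Suc ?j)" using assms(1) unfolding is_walk_def by blast
  moreover have "rev p ! i = p ! Suc ?j" using i by (simp add: rev_nth Suc_diff_Suc)
  moreover have "rev p ! Suc i = p ! ?j" using i by (simp add: rev_nth)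
  ultimately show "E (rev p ! i) (rev p ! Suc i)" using assms(2) by simp
qed

lemma walk_mono:
  assumes "is_walk V E p" "V \<subseteq> V'" "\<And>u v. E u v \<Longrightarrow> E' u v"
  shows "is_walk V' E' p"
  using assms unfolding is_walk_def by auto

lemma walk_betw_single: "v \<in> V \<Longrightarrow> walk_betw V E v [v] v"
  by (simp add: walk_betw_def walk_single)

lemma dist_le:
  assumes "walk_betw V E u p v"
  shows "dist V E u v \<le> length p - 1"
proof -
  have "p \<noteq> []" using assms unfolding walk_betw_def is_walk_def by auto
  then have "walk_betw V E u p v \<and> length p = Suc (length p - 1)" using assms by simp
  then show ?thesis unfolding dist_def by (intro Least_le) blast
qed

lemma dist_witness:
  assumes "walk_betw V E u p v"
  shows "\<exists>q. walk_betw V E u q v \<and> length q = Suc (dist V E u v)"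
proof -
  have "p \<noteq> []" using assms unfolding walk_betw_def is_walk_def by auto
  then have "\<exists>k. \<exists>q. walk_betw V E u q v \<and> length q = Suc k" using assms
    by (intro exI[of _ "length p - 1"] exI[of _ p]) simp
  then show ?thesis unfolding dist_def by (rule LeastI_ex)
qed

lemma walk_betw_concat:
  assumes "walk_betw V E u p v" "walk_betw V E v q w"
  shows "walk_betw V E u (p @ tl q) w \<and> length (p @ tl q) = length p + length q - 1"
proof -
  have pne: "p \<noteq> []" and qne: "q \<noteq> []" using assms unfolding walk_betw_def is_walk_def by auto
  have "is_walk V E (p @ tl q)" using assms walk_concat unfolding walk_betw_def by metis
  moreover have "hd (p @ tl q) = u" using assms pne unfolding walk_betw_def by simp
  moreover have "last (p @ tl q) = w"
  proof (cases "tl q = []")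
    case True
    then have "q = [hd q]" using qne by (cases q) auto
    then show ?thesis using assms True unfolding walk_betw_def by (metis append_Nil2 last.simps)
  next
    case False
    then show ?thesis using assms qne unfolding walk_betw_def by (simp add: last_tl)
  qed
  ultimately show ?thesis using qne unfolding walk_betw_def by (cases q) auto
qed

lemma dist_triangle:
  assumes "walk_betw V E u p v" "walk_betw V E v q w"
  shows "dist V E u w \<le> dist V E u v + dist V E v w"
proof -
  obtain p' where p': "walk_betw V E u p' v" "length p' = Suc (dist V E u v)"
    using dist_witness[OF assms(1)] by blast
  obtain q' where q': "walk_betw V E v q' w" "length q' = Suc (dist V E v w)"
    using dist_witness[OF assms(2)] by blast
  from walk_betw_concat[OF p'(1) q'(1)] have "walk_betw V E u (p' @ tl q') w"
    and "length (p' @ tl q') = length p' + length q' - 1" by auto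
  then show ?thesis using dist_le[of V E u "p' @ tl q'" w] p' q' by simp
qed

lemma walk_betw_rev:
  assumes "walk_betw V E u p v" "\<And>a b. E a b \<Longrightarrow> E b a"
  shows "walk_betw V E v (rev p) u"
proof -
  have pne: "p \<noteq> []" using assms unfolding walk_betw_def is_walk_def by auto
  then show ?thesis using assms walk_rev[OF _ assms(2)] unfolding walk_betw_def by (auto simp: hd_rev last_rev)
qed

lemma dist_sym:
  assumes "walk_betw V E u p v" "\<And>a b. E a b \<Longrightarrow> E b a"
  shows "dist V E v u = dist V E u v"
proof -
  have le: "dist V E y x \<le> dist V E x y" if wq: "walk_betw V E x q y" for x y q
  proof -
    obtain q' where q': "walk_betw V E x q' y" "length q' = Suc (dist V E x y)"
      using dist_witness[OF wq] by blast
    show ?thesis using dist_le[OF walk_betw_rev[OF q'(1) assms(2)]] q'(2) by simp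
  qed
  show ?thesis using le[OF assms(1)] le[OF walk_betw_rev[OF assms(1) assms(2)]] by simp
qed

lemma dist_self: "u \<in> V \<Longrightarrow> dist V E u u = 0"
  using dist_le[OF walk_betw_single[of u V E]] by simp

lemma dist_eq0:
  assumes "walk_betw V E u p v" "dist V E u v = 0"
  shows "u = v"
proof -
  obtain q where q: "walk_betw V E u q v" "length q = Suc 0"
    using dist_witness[OF assms(1)] assms(2) by auto
  then obtain x where "q = [x]" by (cases q) auto
  then show ?thesis using q unfolding walk_betw_def by auto
qed

lemma dist_edge:
  assumes "E u v" "u \<in> V" "v \<in> V"
  shows "dist V E u v \<le> 1"
proof -
  have "walk_betw V E u [u, v] v" using assms unfolding walk_betw_def is_walk_def
    by (auto simp: less_Suc_eq nth_Cons')
  from dist_le[OF this] show ?thesis by simp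
qed

lemma walk_betw_edge:
  assumes "E u v" "u \<in> V" "v \<in> V"
  shows "walk_betw V E u [u, v] v"
  using assms unfolding walk_betw_def is_walk_def
  by (auto simp: less_Suc_eq nth_Cons')

lemma walk_betw_append_edge:
  assumes "walk_betw V E u p v" "E v w" "w \<in> V"
  shows "walk_betw V E u (p @ [w]) w"
proof -
  have pne: "p \<noteq> []" using assms unfolding walk_betw_def is_walk_def by auto
  then show ?thesis using assms walk_append_edge unfolding walk_betw_def by auto
qed

lemma geodesic_split:
  assumes "walk_betw V E u p v" "r \<le> dist V E u v"
  shows "\<exists>y\<in>V. dist V E u y = r \<and> dist V E y v = dist V E u v - r
           \<and> (\<exists>q. walk_betw V E u q y) \<and> (\<exists>q. walk_betw V E y q v)"
proof -
  obtain q where q: "walk_betw V E u q v" "length q = Suc (dist V E u v)"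
    using dist_witness[OF assms(1)] by blast
  let ?y = "q ! r"
  have rl: "r < length q" using q assms(2) by simp
  have lt: "last (take (Suc r) q) = q ! r" proof -
    have "take (Suc r) q \<noteq> []" using rl by (cases q) auto
    then have "last (take (Suc r) q) = take (Suc r) q ! (length (take (Suc r) q) - 1)" by (rule last_conv_nth)
    also have "\<dots> = q ! r" using rl by (auto simp add: min_def intro: arg_cong[where f="(!) q"])
    finally show ?thesis .
  qed
  have w1: "walk_betw V E u (take (Suc r) q) ?y"
    using q rl lt unfolding walk_betw_def
    by (auto simp: walk_take hd_take)
  have w2: "walk_betw V E ?y (drop r q) v"
    using q rl unfolding walk_betw_def
    by (auto simp: walk_drop hd_drop_conv_nth)
  have yV: "?y \<in> V" using q rl unfolding walk_betw_def is_walk_def by auto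
  have d1: "dist V E u ?y \<le> r" using dist_le[OF w1] rl by simp
  have d2: "dist V E ?y v \<le> dist V E u v - r" using dist_le[OF w2] rl q by simp
  have "dist V E u v \<le> dist V E u ?y + dist V E ?y v" by (rule dist_triangle[OF w1 w2])
  then show ?thesis using d1 d2 assms(2) yV w1 w2 by (intro bexI[of _ ?y]) auto
qed

lemma dist_mono:
  assumes "walk_betw V E u p v" "V \<subseteq> V'" "\<And>a b. E a b \<Longrightarrow> E' a b"
  shows "dist V' E' u v \<le> dist V E u v"
proof -
  obtain q where q: "walk_betw V E u q v" "length q = Suc (dist V E u v)"
    using dist_witness[OF assms(1)] by blast
  have "is_walk V' E' q" using q(1) unfolding walk_betw_def by (auto intro: walk_mono[OF _ assms(2)] assms(3))
  then have "walk_betw V' E' u q v" using q(1) unfolding walk_betw_def by blast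
  from dist_le[OF this] q(2) show ?thesis by simp
qed

lemma conn_walk:
  assumes "connected_graph V E" "u \<in> V" "v \<in> V"
  shows "\<exists>p. walk_betw V E u p v"
  using assms unfolding connected_graph_def by blast

lemma sum_Icc_real: "(\<Sum>r\<in>{1..E::nat}. real r) = real E * (real E + 1) / 2"
  by (induction E) (auto simp: field_simps)

lemma sigma_bound:
  fixes c :: "'v \<Rightarrow> real"
  assumes conn: "connected_graph V E" and fin: "finite V" and x: "x \<in> V" and h: "h \<in> V"
    and cb: "\<forall>v\<in>V. b \<le> c v" and ca: "a \<le> c h" and ab: "b \<le> a" and b0: "0 < b"
  shows "(\<Sum>v\<in>V. c v * real (dist V E x v))
          \<le> ((\<Sum>v\<in>V. c v) - a) * ((\<Sum>v\<in>V. c v) + a - b) / (2*b)"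
proof -
  define R where "R = (\<Sum>v\<in>V. c v)"
  define S where "S = (\<Sum>v\<in>V-{x}. c v)"
  define \<sigma> where "\<sigma> = (\<Sum>v\<in>V. c v * real (dist V E x v))"
  define Ec where "Ec = Max (dist V E x ` V)"
  have cpos: "\<And>v. v \<in> V \<Longrightarrow> 0 < c v" using cb b0 by force
  have RS: "R = S + c x" unfolding R_def S_def using fin x by (simp add: sum.remove)
  have SR: "S \<le> R - b" using RS cb x by auto
  have dle: "\<And>v. v \<in> V \<Longrightarrow> dist V E x v \<le> Ec" unfolding Ec_def using fin by auto
  obtain z where z: "z \<in> V" "dist V E x z = Ec" unfolding Ec_def using fin x
    by (metis (mono_tags, lifting) Max_in empty_iff finite_imageI image_iff)
  have exrep: "\<exists>y. y \<in> V \<and> dist V E x y = r" if "r \<in> {1..Ec}" for r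
  proof -
    obtain p where p: "walk_betw V E x p z" using conn_walk[OF conn x z(1)] by blast
    show ?thesis using geodesic_split[OF p, of r] that z by auto
  qed
  define rep where "rep r = (SOME y. y \<in> V \<and> dist V E x y = r)" for r
  have rep: "rep r \<in> V \<and> dist V E x (rep r) = r" if "r \<in> {1..Ec}" for r
    unfolding rep_def using someI_ex[OF exrep[OF that]] .
  have inj: "inj_on rep {1..Ec}" by (rule inj_onI) (metis rep)
  have xn: "x \<notin> rep ` {1..Ec}" using rep dist_self[OF x, of E] by fastforce
  have repsub: "rep ` {1..Ec} \<subseteq> V - {x}" using rep xn by auto
  have "(\<Sum>r\<in>{1..Ec}. b * (real Ec - real r)) \<le> (\<Sum>r\<in>{1..Ec}. c (rep r) * (real Ec - real r))"
    by (rule sum_mono) (use rep cb in \<open>auto intro!: mult_right_mono\<close>)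
  also have "\<dots> = (\<Sum>v\<in>rep ` {1..Ec}. c v * (real Ec - real (dist V E x v)))"
    by (subst sum.reindex[OF inj]) (auto simp: rep)
  also have "\<dots> \<le> (\<Sum>v\<in>V-{x}. c v * (real Ec - real (dist V E x v)))"
  proof (rule sum_mono2)
    show "finite (V - {x})" using fin by simp
    show "rep ` {1..Ec} \<subseteq> V - {x}" by (rule repsub)
    fix v assume "v \<in> V - {x} - rep ` {1..Ec}"
    then have "v \<in> V" by simp
    then have "0 \<le> c v" "0 \<le> real Ec - real (dist V E x v)" using cpos[of v] dle[of v] by auto
    then show "0 \<le> c v * (real Ec - real (dist V E x v))" by simp
  qed
  also have "\<dots> = real Ec * S - (\<Sum>v\<in>V-{x}. c v * real (dist V E x v))"
    unfolding S_def by (simp add: algebra_simps sum_subtractf sum_distrib_left)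
  also have "(\<Sum>v\<in>V-{x}. c v * real (dist V E x v)) = \<sigma>"
    unfolding \<sigma>_def using fin x dist_self[OF x, of E] by (simp add: sum.remove)
  finally have i0: "(\<Sum>r\<in>{1..Ec}. b * (real Ec - real r)) \<le> real Ec * S - \<sigma>" .
  have "(\<Sum>r\<in>{1..Ec}. b * (real Ec - real r)) = b * (real Ec * real Ec - (\<Sum>r\<in>{1..Ec}. real r))"
    by (simp add: sum_subtractf sum_distrib_left[symmetric])
  also have "\<dots> = b * (real Ec * (real Ec - 1) / 2)" unfolding sum_Icc_real by (simp add: algebra_simps)
  finally have i: "b * (real Ec * (real Ec - 1) / 2) \<le> real Ec * S - \<sigma>" using i0 by simp
  define Q where "Q = insert h (insert x (rep ` {1..Ec}))"
  have Qsub: "Q \<subseteq> V" unfolding Q_def using h x repsub by auto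
  have cardQ0: "card (insert x (rep ` {1..Ec})) = Ec + 1"
    using xn card_image[OF inj] fin finite_subset[OF repsub] by simp
  have "card (insert x (rep ` {1..Ec})) \<le> card (Q - {h}) + 1"
  proof -
    have "insert x (rep ` {1..Ec}) \<subseteq> insert h (Q - {h})" unfolding Q_def by auto
    then have "card (insert x (rep ` {1..Ec})) \<le> card (insert h (Q - {h}))"
      by (intro card_mono) (use Qsub fin finite_subset in auto)
    also have "\<dots> \<le> card (Q - {h}) + 1"
    proof -
      have fA: "finite (Q - {h})" using Qsub fin finite_subset by auto
      show ?thesis using card.insert[OF fA, of h] by simp
    qed
    finally show ?thesis .
  qed
  then have cQ: "Ec \<le> card (Q - {h})" using cardQ0 by simp
  have finQ: "finite Q" using Qsub fin finite_subset by auto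
  have "a + b * real Ec \<le> c h + (\<Sum>v\<in>Q-{h}. c v)"
  proof -
    have "b * real (card (Q - {h})) \<le> (\<Sum>v\<in>Q-{h}. c v)"
      using sum_mono[of "Q-{h}" "\<lambda>_. b" c] cb Qsub by (auto simp: mult.commute)
    moreover have "b * real Ec \<le> b * real (card (Q - {h}))" using cQ b0 by simp
    ultimately show ?thesis using ca by linarith
  qed
  also have "\<dots> = (\<Sum>v\<in>Q. c v)"
  proof -
    have hQ: "h \<in> Q" unfolding Q_def by simp
    show ?thesis using sum.remove[OF finQ hQ, of c] by simp
  qed
  also have "\<dots> \<le> R" unfolding R_def
    by (rule sum_mono2[OF fin Qsub]) (use cpos in \<open>auto intro: less_imp_le\<close>)
  finally have ii: "a + b * real Ec \<le> R" .
  have E0: "0 \<le> real Ec" by simp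
  have s1: "\<sigma> \<le> real Ec * (R - b) - b * (real Ec * (real Ec - 1) / 2)"
    using i SR mult_left_mono[OF SR E0] by linarith
  define u where "u = b * real Ec"
  have "2 * b * (real Ec * (R - b) - b * (real Ec * (real Ec - 1) / 2)) = u * (2*R - b - u)"
    unfolding u_def by (simp add: field_simps)
  moreover have "0 \<le> (R - a - u) * (R + a - b - u)"
    using ii ab b0 unfolding u_def by (intro mult_nonneg_nonneg) linarith+
  ultimately have "2 * b * (real Ec * (R - b) - b * (real Ec * (real Ec - 1) / 2)) \<le> (R-a)*(R+a-b)"
    by (simp add: algebra_simps)
  then have "real Ec * (R - b) - b * (real Ec * (real Ec - 1) / 2) \<le> (R-a)*(R+a-b) / (2*b)"
    using b0 by (simp add: field_simps)
  then show ?thesis using s1 unfolding \<sigma>_def R_def by linarith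
qed

lemma even_involution:
  assumes "finite S" "\<forall>x\<in>S. f x \<in> S \<and> f x \<noteq> x \<and> f (f x) = x"
  shows "even (card S)"
  using assms
proof (induction "card S" arbitrary: S rule: less_induct)
  case less
  show ?case
  proof (cases "S = {}")
    case True then show ?thesis by simp
  next
    case False
    then obtain x where x: "x \<in> S" by blast
    define S' where "S' = S - {x, f x}"
    have fx: "f x \<in> S" "f x \<noteq> x" using less.prems x by auto
    have cS: "card S = card S' + 2"
    proof -
      have "card S' = card S - card {x, f x}" unfolding S'_def
        using less.prems(1) x fx by (intro card_Diff_subset) auto
      moreover have "card {x, f x} = 2" using fx by simp
      moreover have "card {x, f x} \<le> card S" using less.prems(1) x fx by (intro card_mono) auto
      ultimately show ?thesis by simp
    qed
    have cl: "\<forall>y\<in>S'. f y \<in> S' \<and> f y \<noteq> y \<and> f (f y) = y"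
    proof
      fix y assume y: "y \<in> S'"
      then have yS: "y \<in> S" "y \<noteq> x" "y \<noteq> f x" unfolding S'_def by auto
      have "f y \<noteq> x" using yS less.prems(2) by metis
      moreover have "f y \<noteq> f x" using yS less.prems(2) x by metis
      ultimately show "f y \<in> S' \<and> f y \<noteq> y \<and> f (f y) = y" using yS less.prems(2) unfolding S'_def by auto
    qed
    have "even (card S')" using less.hyps[of S'] cS cl less.prems(1) unfolding S'_def by auto
    then show ?thesis using cS by simp
  qed
qed

lemma ball2_bound:
  assumes sg: "simple_graph V E" and nc: "\<not> contains_C4 V E" and v: "v \<in> V"
    and mind: "\<forall>u\<in>V. \<delta> \<le> degree V E u"
  shows "degree V E v * \<delta> + 1 - 2 * (degree V E v div 2) \<le> card {u\<in>V. dist V E v u \<le> 2}"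
proof -
  have fin: "finite V" and Ein: "\<And>x y. E x y \<Longrightarrow> x \<in> V \<and> y \<in> V"
    and sym: "\<And>x y. E x y \<Longrightarrow> E y x" and irr: "\<And>x. \<not> E x x"
    using sg unfolding simple_graph_def by auto
  define Nv where "Nv = {u\<in>V. E v u}"
  define Nb where "Nb u = {z\<in>V. E u z}" for u
  define M where "M u = Nb u - insert v Nv" for u
  define Nm where "Nm = {u\<in>Nv. \<exists>w\<in>Nv. E u w}"
  define D where "D = card Nv"
  have D: "degree V E v = D" unfolding D_def Nv_def degree_def by simp
  have finNv: "finite Nv" unfolding Nv_def using fin by simp
  have finM: "\<And>u. finite (M u)" unfolding M_def Nb_def using fin by simp
  have c4: "False" if "a \<in> V" "b \<in> V" "c \<in> V" "d \<in> V" "distinct [a,b,c,d]"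
      "E a b" "E b c" "E c d" "E d a" for a b c d
  proof -
    have "contains_C4 V E" unfolding contains_C4_def
      by (rule bexI[of _ a], rule bexI[of _ b], rule bexI[of _ c], rule bexI[of _ d]) (use that in auto)
    then show False using nc by simp
  qed
  have uniq: "w1 = w2" if "u \<in> Nv" "w1 \<in> Nv" "w2 \<in> Nv" "E u w1" "E u w2" for u w1 w2
  proof (rule ccontr)
    assume ne: "w1 \<noteq> w2"
    have "E v w1" "E v w2" "E v u" using that unfolding Nv_def by auto
    moreover have "E w1 u" "E w2 v" using sym[OF that(4)] sym[OF \<open>E v w2\<close>] by auto
    ultimately show False using that ne v
      by (intro c4[of v w1 u w2]) (auto simp: Nv_def irr)
  qed
  have disj: "M u \<inter> M u' = {}" if "u \<in> Nv" "u' \<in> Nv" "u \<noteq> u'" for u u'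
  proof (rule ccontr)
    assume "M u \<inter> M u' \<noteq> {}"
    then obtain z where z: "z \<in> M u" "z \<in> M u'" by blast
    then have zz: "E u z" "E u' z" "z \<noteq> v" "z \<notin> Nv" "z \<in> V" unfolding M_def Nb_def by auto
    have "E v u" "E v u'" using that unfolding Nv_def by auto
    moreover have "E z u'" "E u' v" using sym[OF zz(2)] sym[OF \<open>E v u'\<close>] by auto
    ultimately show False using zz that v
      by (intro c4[of v u z u']) (auto simp: Nv_def irr)
  qed
  define B where "B = insert v (Nv \<union> (\<Union>u\<in>Nv. M u))"
  have vNv: "v \<notin> Nv" unfolding Nv_def using irr by auto
  have cUM: "card (\<Union>u\<in>Nv. M u) = (\<Sum>u\<in>Nv. card (M u))"
    by (rule card_UN_disjoint[OF finNv]) (use finM disj in auto)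
  have cB: "card B = 1 + D + (\<Sum>u\<in>Nv. card (M u))"
  proof -
    have f2: "finite (\<Union>u\<in>Nv. M u)" using finNv finM by simp
    have "Nv \<inter> (\<Union>u\<in>Nv. M u) = {}" unfolding M_def by auto
    then have "card (Nv \<union> (\<Union>u\<in>Nv. M u)) = D + card (\<Union>u\<in>Nv. M u)"
      unfolding D_def using card_Un_disjoint[OF finNv f2] by simp
    moreover have "v \<notin> Nv \<union> (\<Union>u\<in>Nv. M u)" using vNv unfolding M_def by auto
    ultimately show ?thesis unfolding B_def using finNv f2 cUM by simp
  qed
  have Bsub: "B \<subseteq> {u\<in>V. dist V E v u \<le> 2}"
  proof
    fix y assume y: "y \<in> B"
    show "y \<in> {u\<in>V. dist V E v u \<le> 2}"
    proof (cases "y = v")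
      case True then show ?thesis using v dist_self[OF v] by simp
    next
      case False
      show ?thesis
      proof (cases "y \<in> Nv")
        case True
        then have "E v y" "y \<in> V" unfolding Nv_def by auto
        then show ?thesis using dist_edge[of E v y V] v by simp
      next
        case False
        then obtain u where u: "u \<in> Nv" "y \<in> M u" using y \<open>y \<noteq> v\<close> unfolding B_def by auto
        then have e: "E v u" "E u y" "u \<in> V" "y \<in> V" unfolding Nv_def M_def Nb_def by auto
        have w: "walk_betw V E v ([v, u] @ [y]) y"
          by (rule walk_betw_append_edge[OF walk_betw_edge[of E v u V, OF e(1) v e(3)] e(2) e(4)])
        show ?thesis using dist_le[OF w] e by simp
      qed
    qed
  qed
  have degu: "degree V E u \<le> card (M u) + 1 + (if u \<in> Nm then 1 else 0)" if u: "u \<in> Nv" for u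
  proof -
    have "Nb u \<subseteq> M u \<union> ({v} \<union> (Nb u \<inter> Nv))" unfolding M_def by auto
    then have "card (Nb u) \<le> card (M u \<union> ({v} \<union> (Nb u \<inter> Nv)))"
      by (intro card_mono) (use finM finNv in auto)
    also have "\<dots> \<le> card (M u) + card ({v} \<union> (Nb u \<inter> Nv))" by (rule card_Un_le)
    also have "\<dots> \<le> card (M u) + (1 + card (Nb u \<inter> Nv))"
      using card_Un_le[of "{v}" "Nb u \<inter> Nv"] by simp
    also have "card (Nb u \<inter> Nv) \<le> (if u \<in> Nm then 1 else 0)"
    proof (cases "u \<in> Nm")
      case True
      have "Nb u \<inter> Nv \<subseteq> {THE w. w \<in> Nb u \<inter> Nv}"
      proof
        fix w assume w: "w \<in> Nb u \<inter> Nv"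
        have all: "\<forall>w'. w' \<in> Nb u \<inter> Nv \<longrightarrow> w' = w"
        proof (intro allI impI)
          fix w' assume w': "w' \<in> Nb u \<inter> Nv"
          then have "w' \<in> Nv" "E u w'" "w \<in> Nv" "E u w" using w unfolding Nb_def by auto
          then show "w' = w" using uniq[of u w' w] u by blast
        qed
        then have "(THE w. w \<in> Nb u \<inter> Nv) = w" using w by (intro the_equality) blast+
        then show "w \<in> {THE w. w \<in> Nb u \<inter> Nv}" by simp
      qed
      then have "card (Nb u \<inter> Nv) \<le> card {THE w. w \<in> Nb u \<inter> Nv}" by (intro card_mono) auto
      then show ?thesis using True by simp
    next
      case False
      then have "Nb u \<inter> Nv = {}" using u unfolding Nm_def Nb_def by auto
      then show ?thesis by simp
    qed
    finally show ?thesis unfolding degree_def Nb_def by simp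
  qed
  have sumdeg: "D * \<delta> \<le> (\<Sum>u\<in>Nv. card (M u)) + D + card Nm"
  proof -
    have "D * \<delta> = (\<Sum>u\<in>Nv. \<delta>)" unfolding D_def by simp
    also have "\<dots> \<le> (\<Sum>u\<in>Nv. degree V E u)" using mind unfolding Nv_def by (intro sum_mono) auto
    also have "\<dots> \<le> (\<Sum>u\<in>Nv. card (M u) + 1 + (if u \<in> Nm then 1 else 0))"
      by (intro sum_mono degu)
    also have "\<dots> = (\<Sum>u\<in>Nv. card (M u)) + D + (\<Sum>u\<in>Nv. (if u \<in> Nm then 1 else 0))"
      unfolding D_def by (simp only: sum.distrib) simp
    also have "(\<Sum>u\<in>Nv. (if u \<in> Nm then 1 else 0)) = card Nm"
    proof -
      have "(\<Sum>u\<in>Nv. (if u \<in> Nm then 1 else 0)) = (\<Sum>u\<in>{u\<in>Nv. u \<in> Nm}. (1::nat))"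
        using sum.inter_filter[OF finNv, of "\<lambda>_. (1::nat)" "\<lambda>u. u \<in> Nm"] by simp
      also have "{u\<in>Nv. u \<in> Nm} = Nm" unfolding Nm_def by auto
      finally show ?thesis by simp
    qed
    finally show ?thesis .
  qed
  define f where "f u = (THE w. w \<in> Nv \<and> E u w)" for u
  have fprop: "f u \<in> Nv \<and> E u (f u)" if um: "u \<in> Nm" for u
  proof -
    obtain w where w: "w \<in> Nv" "E u w" using um unfolding Nm_def by auto
    have "u \<in> Nv" using um unfolding Nm_def by auto
    then have "f u = w" unfolding f_def
    proof (intro the_equality)
      show "w \<in> Nv \<and> E u w" using w by simp
      fix w' assume "w' \<in> Nv \<and> E u w'"
      then show "w' = w" using uniq[of u w' w] w \<open>u \<in> Nv\<close> by blast
    qed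
    then show ?thesis using w by simp
  qed
  have "even (card Nm)"
  proof (rule even_involution)
    show "finite Nm" unfolding Nm_def using finNv by simp
    show "\<forall>x\<in>Nm. f x \<in> Nm \<and> f x \<noteq> x \<and> f (f x) = x"
    proof
      fix x assume x: "x \<in> Nm"
      have xN: "x \<in> Nv" using x unfolding Nm_def by auto
      have fx: "f x \<in> Nv" "E x (f x)" using fprop[OF x] by auto
      have fxm: "f x \<in> Nm" unfolding Nm_def using fx xN sym[OF fx(2)] by auto
      have "f (f x) = x" using fprop[OF fxm] uniq[OF fx(1)] fx xN sym[OF fx(2)] by metis
      then show "f x \<in> Nm \<and> f x \<noteq> x \<and> f (f x) = x" using fxm fx irr by metis
    qed
  qed
  moreover have "card Nm \<le> D" unfolding D_def Nm_def by (intro card_mono finNv) auto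
  ultimately have "card Nm \<le> 2 * (D div 2)" by presburger
  moreover have "card B \<le> card {u\<in>V. dist V E v u \<le> 2}" by (intro card_mono Bsub) (use fin in simp)
  ultimately have "D * \<delta> + 1 \<le> card {u\<in>V. dist V E v u \<le> 2} + 2 * (D div 2)"
    using cB sumdeg by linarith
  then show ?thesis unfolding D by (simp add: le_diff_conv)
qed

definition packP :: "'a set \<Rightarrow> ('a \<Rightarrow> 'a \<Rightarrow> bool) \<Rightarrow> 'a \<Rightarrow> nat \<Rightarrow> (nat \<Rightarrow> 'a) \<Rightarrow> bool" where
  "packP V E v0 k s \<longleftrightarrow> 1 \<le> k \<and> s 0 = v0 \<and> (\<forall>i<k. s i \<in> V) \<and>
     (\<forall>i<k. \<forall>j<i. 5 \<le> dist V E (s j) (s i)) \<and>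
     (\<forall>i. 0 < i \<and> i < k \<longrightarrow> (\<exists>j<i. dist V E (s j) (s i) = 5))"

lemma packP_bound:
  assumes "packP V E v0 k s" "finite V"
  shows "k \<le> card V"
proof -
  have inj: "inj_on s {..<k}"
  proof (rule inj_onI)
    fix i j assume ij: "i \<in> {..<k}" "j \<in> {..<k}" "s i = s j"
    show "i = j"
    proof (rule ccontr)
      assume "i \<noteq> j"
      then consider "j < i" | "i < j" by linarith
      then show False
      proof cases
        case 1
        have A: "\<forall>i<k. \<forall>j<i. 5 \<le> dist V E (s j) (s i)" using assms unfolding packP_def by simp
        have "i < k" using ij by simp
        then have "5 \<le> dist V E (s j) (s i)" using A 1 by blast
        moreover have "s i \<in> V" using assms ij unfolding packP_def by auto
        ultimately show False using ij dist_self[of "s i" V E] by simp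
      next
        case 2
        have A: "\<forall>i<k. \<forall>j<i. 5 \<le> dist V E (s j) (s i)" using assms unfolding packP_def by simp
        have "j < k" using ij by simp
        then have "5 \<le> dist V E (s i) (s j)" using A 2 by blast
        moreover have "s i \<in> V" using assms ij unfolding packP_def by auto
        ultimately show False using ij dist_self[of "s i" V E] by simp
      qed
    qed
  qed
  have "s ` {..<k} \<subseteq> V" using assms unfolding packP_def by auto
  then have "card (s ` {..<k}) \<le> card V" using assms(2) by (intro card_mono) auto
  then show ?thesis using card_image[OF inj] by simp
qed

lemma packing:
  assumes sg: "simple_graph V E" and conn: "connected_graph V E" and v0: "v0 \<in> V"
  shows "\<exists>k s. packP V E v0 k s \<and> (\<forall>z\<in>V. \<exists>i<k. dist V E (s i) z \<le> 4)"
proof -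
  have fin: "finite V" using sg unfolding simple_graph_def by auto
  define K where "K = (GREATEST k. \<exists>s. packP V E v0 k s)"
  have P1: "packP V E v0 1 (\<lambda>_. v0)" unfolding packP_def using v0 by auto
  have bnd: "\<forall>k. (\<exists>s. packP V E v0 k s) \<longrightarrow> k \<le> card V"
  proof (intro allI impI)
    fix k assume "\<exists>s. packP V E v0 k s"
    then obtain s where "packP V E v0 k s" by blast
    then show "k \<le> card V" by (rule packP_bound[OF _ fin])
  qed
  have "\<exists>s. packP V E v0 K s" unfolding K_def
    by (rule GreatestI_nat[of _ 1 "card V"]) (use P1 bnd in auto)
  then obtain s where s: "packP V E v0 K s" by blast
  have K1: "1 \<le> K" using s unfolding packP_def by simp
  have sV: "\<And>i. i < K \<Longrightarrow> s i \<in> V" using s unfolding packP_def by simp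
  have sD: "\<forall>i<K. \<forall>j<i. 5 \<le> dist V E (s j) (s i)" using s unfolding packP_def by simp
  have sE: "\<forall>i. 0 < i \<and> i < K \<longrightarrow> (\<exists>j<i. dist V E (s j) (s i) = 5)" using s unfolding packP_def by simp
  have s0: "s 0 = v0" using s unfolding packP_def by simp
  have "\<forall>z\<in>V. \<exists>i<K. dist V E (s i) z \<le> 4"
  proof (rule ccontr)
    assume "\<not> (\<forall>z\<in>V. \<exists>i<K. dist V E (s i) z \<le> 4)"
    then obtain z where z: "z \<in> V" "\<forall>i<K. 4 < dist V E (s i) z" by (auto simp: not_le)
    define m where "m = Min ((\<lambda>i. dist V E (s i) z) ` {..<K})"
    have "0 \<in> {..<K}" using K1 by simp
    then have ne: "(\<lambda>i. dist V E (s i) z) ` {..<K} \<noteq> {}" by blast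
    obtain i0 where i0: "i0 < K" "dist V E (s i0) z = m"
      using Min_in[OF _ ne] unfolding m_def by auto
    have mle: "\<And>i. i < K \<Longrightarrow> m \<le> dist V E (s i) z" unfolding m_def by auto
    have m5: "5 \<le> m" using z i0 by fastforce
    obtain p where p: "walk_betw V E (s i0) p z" using conn_walk[OF conn sV[OF i0(1)] z(1)] by blast
    obtain y where y: "y \<in> V" "dist V E (s i0) y = 5" "dist V E y z = m - 5"
      using geodesic_split[OF p, of 5] m5 i0 by auto
    have far: "5 \<le> dist V E (s j) y" if j: "j < K" for j
    proof -
      obtain p1 where p1: "walk_betw V E (s j) p1 y" using conn_walk[OF conn sV[OF j] y(1)] by blast
      obtain p2 where p2: "walk_betw V E y p2 z" using conn_walk[OF conn y(1) z(1)] by blast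
      have "dist V E (s j) z \<le> dist V E (s j) y + dist V E y z" by (rule dist_triangle[OF p1 p2])
      then show ?thesis using mle[OF j] y m5 by linarith
    qed
    define s' where "s' = s(K := y)"
    have "packP V E v0 (Suc K) s'"
      unfolding packP_def
    proof (intro conjI allI impI)
      show "1 \<le> Suc K" by simp
      show "s' 0 = v0" using s0 K1 unfolding s'_def by auto
    next
      fix i assume "i < Suc K"
      then show "s' i \<in> V" using sV y unfolding s'_def by (cases "i = K") auto
    next
      fix i j assume ij: "i < Suc K" "j < i"
      show "5 \<le> dist V E (s' j) (s' i)"
      proof (cases "i = K")
        case True then show ?thesis using far[of j] ij unfolding s'_def by auto
      next
        case False
        then have "i < K" "j < K" using ij by auto
        then show ?thesis using sD ij False unfolding s'_def by auto
      qed
    next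
      fix i assume i: "0 < i \<and> i < Suc K"
      show "\<exists>j<i. dist V E (s' j) (s' i) = 5"
      proof (cases "i = K")
        case True then show ?thesis using i0 y unfolding s'_def by (intro exI[of _ i0]) auto
      next
        case False
        then have "0 < i \<and> i < K" using i by auto
        then obtain j where "j < i" "dist V E (s j) (s i) = 5" using sE by blast
        then show ?thesis using False i unfolding s'_def by (intro exI[of _ j]) auto
      qed
    qed
    then have "\<exists>s. packP V E v0 (Suc K) s" by blast
    then have "Suc K \<le> K" unfolding K_def by (rule Greatest_le_nat[of _ _ "card V"]) (use bnd in auto)
    then show False by simp
  qed
  then show ?thesis using s by blast
qed

definition Et :: "(nat \<Rightarrow> nat) \<Rightarrow> nat \<Rightarrow> nat \<Rightarrow> nat \<Rightarrow> bool" where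
  "Et par m i j \<longleftrightarrow> i < m \<and> j < m \<and> ((0 < j \<and> i = par j) \<or> (0 < i \<and> j = par i))"

lemma Et_sym: "Et par m i j \<Longrightarrow> Et par m j i"
  unfolding Et_def by auto

lemma Et_mono: "Et par m i j \<Longrightarrow> m \<le> m' \<Longrightarrow> Et par m' i j"
  unfolding Et_def by auto

lemma tree_reach:
  assumes par: "\<forall>j. 0 < j \<longrightarrow> par j < j" and i: "i < m"
  shows "\<exists>p. walk_betw {..<m} (Et par m) 0 p i"
  using i
proof (induction i rule: less_induct)
  case (less i)
  show ?case
  proof (cases "i = 0")
    case True
    then show ?thesis using less.prems walk_betw_single[of 0 "{..<m}" "Et par m"] by auto
  next
    case False
    then have pi: "par i < i" using par by simp
    then obtain p where p: "walk_betw {..<m} (Et par m) 0 p (par i)" using less by auto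
    have "Et par m (par i) i" unfolding Et_def using pi less.prems False by auto
    then show ?thesis using walk_betw_append_edge[OF p] less.prems by blast
  qed
qed

lemma tree_conn:
  assumes par: "\<forall>j. 0 < j \<longrightarrow> par j < j" and m: "1 \<le> m"
  shows "connected_graph {..<m} (Et par m)"
  unfolding connected_graph_def
proof (intro ballI)
  fix u v assume u: "u \<in> {..<m}" and v: "v \<in> {..<m}"
  obtain p where p: "walk_betw {..<m} (Et par m) 0 p u" using tree_reach[OF par] u by auto
  obtain q where q: "walk_betw {..<m} (Et par m) 0 q v" using tree_reach[OF par] v by auto
  have "walk_betw {..<m} (Et par m) u (rev p) 0" by (rule walk_betw_rev[OF p Et_sym])
  then show "\<exists>p. walk_betw {..<m} (Et par m) u p v" using walk_betw_concat[OF _ q] by blast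
qed

lemma poly_step:
  fixes a b c R :: real
  assumes b1: "1 \<le> b" and ab: "b \<le> a" and bc: "b \<le> c" and aR: "a \<le> R"
  shows "(R-a+b)*(R-a+b-1)*(R+2*a)/(3*b) + 2*c*(R + (R-a)*(R+a-b)/(2*b))
          \<le> ((R+c)-a+b)*((R+c)-a+b-1)*((R+c)+2*a)/(3*b)"
proof -
  define Y where "Y = R - a"
  have Y0: "0 \<le> Y" using aR unfolding Y_def by simp
  define Q where "Q = (b-2)*Y + b*b - b - 3*a + c*(3*Y+3*a+2*b-1) + c*c"
  have eq: "((R+c)-a+b)*((R+c)-a+b-1)*((R+c)+2*a)/(3*b)
      - ((R-a+b)*(R-a+b-1)*(R+2*a)/(3*b) + 2*c*(R + (R-a)*(R+a-b)/(2*b))) = c * Q / (3*b)"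
    using b1 unfolding Q_def Y_def by (simp add: field_simps)
  have h1: "b*(3*Y+3*a+2*b-1) \<le> c*(3*Y+3*a+2*b-1)"
    using bc Y0 ab b1 by (intro mult_right_mono) auto
  have h2: "b*b \<le> c*c" using bc b1 by (intro mult_mono) auto
  have h3: "0 \<le> (b-1)*a" using b1 ab by auto
  have h4: "0 \<le> (4*b-2)*Y" using b1 Y0 by auto
  have h5: "b \<le> b*b" using b1 by (simp add: mult_le_cancel_left1)
  have "0 \<le> Q" unfolding Q_def using h1 h2 h3 h4 h5 b1 by (simp only: ring_distribs)
  then have "0 \<le> c * Q / (3*b)" using bc b1 by (intro divide_nonneg_pos mult_nonneg_nonneg) auto
  then show ?thesis using eq by linarith
qed

definition Fn :: "real \<Rightarrow> real \<Rightarrow> real \<Rightarrow> real" where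
  "Fn a b R = (R-a+b)*(R-a+b-1)*(R+2*a)/(3*b)"

lemma phi_bound:
  fixes c :: "nat \<Rightarrow> real"
  assumes par: "\<forall>j. 0 < j \<longrightarrow> par j < j" and ca: "a \<le> c 0" and ab: "b \<le> a" and b1: "1 \<le> b"
    and m: "1 \<le> m" and cb: "\<forall>i<m. b \<le> c i"
  shows "(\<Sum>i<m. \<Sum>j<m. c i * c j * real (dist {..<m} (Et par m) i j)) \<le> Fn a b (\<Sum>i<m. c i)"
  using m cb
proof (induction m rule: nat_induct_at_least)
  case base
  have "0 \<le> Fn a b (c 0)" unfolding Fn_def using ca ab b1
    by (intro divide_nonneg_pos mult_nonneg_nonneg) auto
  then show ?case using dist_self[of 0 "{..<1}" "Et par 1"] by simp
next
  case (Suc m)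
  let ?T = "Et par (Suc m)" and ?T' = "Et par m" and ?V = "{..<Suc m}" and ?V' = "{..<m}"
  define R where "R = (\<Sum>j<m. c j)"
  define p where "p = par m"
  have pm: "p < m" unfolding p_def using par Suc.hyps by auto
  have cb': "\<forall>i<m. b \<le> c i" using Suc.prems by auto
  have cpos: "\<And>i. i < Suc m \<Longrightarrow> 0 \<le> c i" using Suc.prems b1 by force
  have IH: "(\<Sum>i<m. \<Sum>j<m. c i * c j * real (dist ?V' ?T' i j)) \<le> Fn a b R"
    unfolding R_def using Suc.IH cb' by simp
  have connT': "connected_graph ?V' ?T'" by (rule tree_conn[OF par Suc.hyps])
  have connT: "connected_graph ?V ?T" by (rule tree_conn[OF par]) simp
  have d2: "dist ?V ?T i j \<le> dist ?V' ?T' i j" if ij: "i < m" "j < m" for i j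
  proof -
    obtain w where "walk_betw ?V' ?T' i w j" using conn_walk[OF connT', of i j] ij by auto
    then show ?thesis by (rule dist_mono) (auto intro: Et_mono)
  qed
  have d4: "dist ?V ?T i m = dist ?V ?T m i" if ii: "i < m" for i
  proof -
    obtain w where "walk_betw ?V ?T m w i" using conn_walk[OF connT, of m i] ii by auto
    then show ?thesis using dist_sym Et_sym by metis
  qed
  have d5: "dist ?V ?T m j \<le> 1 + dist ?V' ?T' p j" if jj: "j < m" for j
  proof -
    have e: "?T m p" unfolding Et_def p_def using pm Suc.hyps p_def by auto
    have w1: "walk_betw ?V ?T m [m, p] p" by (rule walk_betw_edge[of ?T m p ?V, OF e]) (use pm in auto)
    obtain w2 where w2: "walk_betw ?V ?T p w2 j" using conn_walk[OF connT, of p j] jj pm by auto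
    have "dist ?V ?T m j \<le> dist ?V ?T m p + dist ?V ?T p j" by (rule dist_triangle[OF w1 w2])
    moreover have "dist ?V ?T m p \<le> 1" by (rule dist_edge[of ?T m p ?V, OF e]) (use pm in auto)
    moreover have "dist ?V ?T p j \<le> dist ?V' ?T' p j" using d2 pm jj by simp
    ultimately show ?thesis by simp
  qed
  define \<sigma> where "\<sigma> = (\<Sum>j<m. c j * real (dist ?V' ?T' p j))"
  have sig: "\<sigma> \<le> (R - a) * (R + a - b) / (2*b)"
    unfolding \<sigma>_def R_def
    by (rule sigma_bound[OF connT', of p 0 b c a]) (use pm Suc.hyps cb' ca ab b1 in auto)
  define g where "g i j = c i * c j * real (dist ?V ?T i j)" for i j
  have split: "(\<Sum>i<Suc m. \<Sum>j<Suc m. g i j)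
      = (\<Sum>i<m. \<Sum>j<m. g i j) + (\<Sum>i<m. g i m) + (\<Sum>j<m. g m j) + g m m"
    by (simp add: sum.distrib)
  have gmm: "g m m = 0" unfolding g_def using dist_self[of m ?V ?T] by simp
  have s1: "(\<Sum>i<m. \<Sum>j<m. g i j) \<le> (\<Sum>i<m. \<Sum>j<m. c i * c j * real (dist ?V' ?T' i j))"
    unfolding g_def
    by (intro sum_mono mult_left_mono) (use d2 cpos in auto)
  have s2: "(\<Sum>i<m. g i m) = (\<Sum>j<m. g m j)" unfolding g_def using d4 by (simp add: mult.commute)
  have s3: "(\<Sum>j<m. g m j) \<le> (\<Sum>j<m. c m * (c j * (1 + real (dist ?V' ?T' p j))))"
    unfolding g_def
  proof (intro sum_mono)
    fix j assume j: "j \<in> {..<m}"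
    have "real (dist ?V ?T m j) \<le> 1 + real (dist ?V' ?T' p j)" using d5 j by fastforce
    then have "c m * c j * real (dist ?V ?T m j) \<le> c m * c j * (1 + real (dist ?V' ?T' p j))"
      using cpos[of m] cpos[of j] j by (intro mult_left_mono) auto
    then show "c m * c j * real (dist ?V ?T m j) \<le> c m * (c j * (1 + real (dist ?V' ?T' p j)))"
      by (simp add: mult.assoc)
  qed
  have s4: "(\<Sum>j<m. c m * (c j * (1 + real (dist ?V' ?T' p j)))) = c m * (R + \<sigma>)"
    unfolding R_def \<sigma>_def by (simp add: sum_distrib_left algebra_simps sum.distrib)
  have "(\<Sum>i<Suc m. \<Sum>j<Suc m. g i j) \<le> Fn a b R + 2 * (c m * (R + \<sigma>))"
    using split gmm s1 s2 s3 s4 IH by linarith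
  also have "\<dots> \<le> Fn a b R + 2 * c m * (R + (R - a) * (R + a - b) / (2*b))"
    using sig cpos[of m] by (simp add: mult_left_mono)
  also have "\<dots> \<le> Fn a b (R + c m)"
  proof -
    have "c 0 \<le> R" unfolding R_def using Suc.hyps cpos
      by (intro member_le_sum) auto
    then have "a \<le> R" using ca by simp
    moreover have "b \<le> c m" using Suc.prems by simp
    ultimately show ?thesis unfolding Fn_def using poly_step[of b a "c m" R] ab b1 by simp
  qed
  finally show ?case unfolding g_def R_def by simp
qed

lemma group_sum:
  fixes f :: "nat \<Rightarrow> real"
  assumes "finite V" "\<forall>u\<in>V. asg u < k"
  shows "(\<Sum>u\<in>V. f (asg u)) = (\<Sum>i<k. real (card {u\<in>V. asg u = i}) * f i)"
proof -
  have "(\<Sum>u\<in>V. f (asg u)) = (\<Sum>i<k. \<Sum>u\<in>{x. x \<in> V \<and> asg x = i}. f (asg u))"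
    by (rule sum.group[symmetric]) (use assms in auto)
  also have "\<dots> = (\<Sum>i<k. \<Sum>u\<in>{x. x \<in> V \<and> asg x = i}. f i)"
    by (intro sum.cong refl) auto
  also have "\<dots> = (\<Sum>i<k. real (card {u\<in>V. asg u = i}) * f i)" by simp
  finally show ?thesis .
qed

lemma eR_mono:
  assumes "2 \<le> \<delta>" "\<delta> \<le> D"
  shows "real (\<delta> * \<delta>) - 2 * real (\<delta> div 2) \<le> real (D * \<delta>) - 2 * real (D div 2)"
proof (cases "D = \<delta>")
  case True then show ?thesis by simp
next
  case False
  then have D1: "\<delta> + 1 \<le> D" using assms by simp
  have h1: "real (2 * (D div 2)) \<le> real D" by simp
  have h2: "real \<delta> - 1 \<le> real (2 * (\<delta> div 2))" by linarith
  have h3: "(real \<delta> + 1) * (real \<delta> - 1) \<le> real D * (real \<delta> - 1)"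
    using D1 assms by (intro mult_right_mono) auto
  have "real (\<delta> * \<delta>) - 2 * real (\<delta> div 2) \<le> real \<delta> * real \<delta> - real \<delta> + 1" using h2 by simp
  also have "\<dots> \<le> real D * (real \<delta> - 1)" using h3 assms by (simp add: algebra_simps)
  also have "\<dots> \<le> real (D * \<delta>) - 2 * real (D div 2)" using h1 by (simp add: algebra_simps)
  finally show ?thesis .
qed

lemma tree_to_graph:
  assumes conn: "connected_graph V E" and sym: "\<And>x y. E x y \<Longrightarrow> E y x"
    and sV: "\<forall>i<k. s i \<in> V"
    and par5: "\<forall>j. 0 < j \<and> j < k \<longrightarrow> dist V E (s (par j)) (s j) = 5"
    and w: "is_walk {..<k} (Et par k) q"
  shows "dist V E (s (hd q)) (s (last q)) \<le> 5 * (length q - 1)"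
  using w
proof (induction q)
  case Nil then show ?case unfolding is_walk_def by simp
next
  case (Cons x q)
  have xk: "x < k" using Cons.prems unfolding is_walk_def by auto
  show ?case
  proof (cases "q = []")
    case True
    then show ?thesis using dist_self[of "s x" V E] sV xk by simp
  next
    case False
    then obtain y r where q: "q = y # r" by (cases q) auto
    have wq: "is_walk {..<k} (Et par k) q" using walk_drop[OF Cons.prems, of 1] False by simp
    have e: "Et par k x y" using Cons.prems q unfolding is_walk_def by fastforce
    have yk: "y < k" using e unfolding Et_def by simp
    have dxy: "dist V E (s x) (s y) \<le> 5"
    proof -
      obtain w where w: "walk_betw V E (s x) w (s y)" using conn_walk[OF conn] sV xk yk by blast
      from e consider "0 < y \<and> x = par y" | "0 < x \<and> y = par x" unfolding Et_def by auto
      then show ?thesis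
      proof cases
        case 1 then show ?thesis using par5 yk by auto
      next
        case 2 then have "dist V E (s y) (s x) = 5" using par5 xk by auto
        then show ?thesis using dist_sym[OF w sym] by simp
      qed
    qed
    have IH: "dist V E (s y) (s (last q)) \<le> 5 * (length q - 1)" using Cons.IH[OF wq] q by simp
    have lq: "last q \<in> set q" using False by simp
    moreover have "set q \<subseteq> {..<k}" using wq unfolding is_walk_def by auto
    ultimately have lk: "last q < k" by auto
    obtain w1 where w1: "walk_betw V E (s x) w1 (s y)" using conn_walk[OF conn] sV xk yk by blast
    obtain w2 where w2: "walk_betw V E (s y) w2 (s (last q))" using conn_walk[OF conn] sV yk lk by blast
    have "dist V E (s x) (s (last q)) \<le> dist V E (s x) (s y) + dist V E (s y) (s (last q))"
      by (rule dist_triangle[OF w1 w2])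
    then show ?thesis using dxy IH False q by simp
  qed
qed

theorem theorem6p2:
  fixes V :: "'a set" and E :: "'a \<Rightarrow> 'a \<Rightarrow> bool"
  assumes sg: "simple_graph V E"
    and conn: "connected_graph V E"
    and n2: "card V \<ge> 2"
    and md: "min_degree V E \<ge> 3"
    and nc: "\<not> contains_C4 V E"
  shows "let n = card V; \<delta> = min_degree V E; \<Delta> = max_degree V E;
             e\<^sub>\<Delta> = real (\<Delta> * \<delta>) - 2 * real (\<Delta> div 2) + 1;
             e\<^sub>\<delta> = real (\<delta> ^ 2) - 2 * real (\<delta> div 2) + 1;
             N = real n - e\<^sub>\<Delta> + e\<^sub>\<delta>
         in avg_dist V E \<le> 5 / 3 * (N * (N - 1) / (real n * (real n - 1)))
                               * ((real n + 2 * e\<^sub>\<Delta>) / e\<^sub>\<delta>) + 8"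
proof -
  define n where "n = card V"
  define \<delta> where "\<delta> = min_degree V E"
  define \<Delta> where "\<Delta> = max_degree V E"
  define a where "a = real (\<Delta> * \<delta>) - 2 * real (\<Delta> div 2) + 1"
  define b where "b = real (\<delta> ^ 2) - 2 * real (\<delta> div 2) + 1"
  have fin: "finite V" using sg unfolding simple_graph_def by auto
  have sym: "\<And>x y. E x y \<Longrightarrow> E y x" using sg unfolding simple_graph_def by auto
  have Vne: "V \<noteq> {}" using n2 by auto
  have mind: "\<forall>u\<in>V. \<delta> \<le> degree V E u" unfolding \<delta>_def min_degree_def using fin by auto
  obtain v0 where v0: "v0 \<in> V" "degree V E v0 = \<Delta>"
    unfolding \<Delta>_def max_degree_def using fin Vne
    by (metis (mono_tags, lifting) Max_in empty_is_image finite_imageI imageE)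
  have d3: "3 \<le> \<delta>" using md unfolding \<delta>_def by simp
  have dD: "\<delta> \<le> \<Delta>" using mind v0 by auto
  have ballR: "real (degree V E v * \<delta>) - 2 * real (degree V E v div 2) + 1
      \<le> real (card {u\<in>V. dist V E v u \<le> 2})" if v: "v \<in> V" for v
  proof -
    have h: "degree V E v * \<delta> + 1 - 2 * (degree V E v div 2) \<le> card {u\<in>V. dist V E v u \<le> 2}"
      by (rule ball2_bound[OF sg nc v mind])
    have "2 * (degree V E v div 2) \<le> degree V E v" by simp
    also have "\<dots> \<le> degree V E v * \<delta>" using d3 by simp
    finally have le: "2 * (degree V E v div 2) \<le> degree V E v * \<delta>" .
    have "real (degree V E v * \<delta> + 1 - 2 * (degree V E v div 2))
        = real (degree V E v * \<delta>) - 2 * real (degree V E v div 2) + 1"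
      using le by (simp add: of_nat_diff)
    then show ?thesis using h by (metis of_nat_le_iff)
  qed
  have bdef: "b = real (\<delta> * \<delta>) - 2 * real (\<delta> div 2) + 1" unfolding b_def by (simp add: power2_eq_square)
  have ballb: "b \<le> real (card {u\<in>V. dist V E v u \<le> 2})" if v: "v \<in> V" for v
    using eR_mono[of \<delta> "degree V E v"] d3 mind v ballR[OF v] unfolding bdef by fastforce
  have balla: "a \<le> real (card {u\<in>V. dist V E v0 u \<le> 2})"
    using ballR[OF v0(1)] v0(2) unfolding a_def by simp
  have ab: "b \<le> a" using eR_mono[of \<delta> \<Delta>] d3 dD unfolding bdef a_def by simp
  have b1: "1 \<le> b"
  proof -
    have "real (2 * (\<delta> div 2)) \<le> real (\<delta> * \<delta>)" using d3 by (intro of_nat_mono) (simp add: le_trans[OF _ le_square])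
    then show ?thesis unfolding bdef by simp
  qed
  obtain k s where pk: "packP V E v0 k s" and cover: "\<forall>z\<in>V. \<exists>i<k. dist V E (s i) z \<le> 4"
    using packing[OF sg conn v0(1)] by blast
  have k1: "1 \<le> k" using pk unfolding packP_def by simp
  have sV: "\<forall>i<k. s i \<in> V" using pk unfolding packP_def by simp
  have sD: "\<forall>i<k. \<forall>j<i. 5 \<le> dist V E (s j) (s i)" using pk unfolding packP_def by simp
  have sE: "\<forall>i. 0 < i \<and> i < k \<longrightarrow> (\<exists>j<i. dist V E (s j) (s i) = 5)" using pk unfolding packP_def by simp
  have s0: "s 0 = v0" using pk unfolding packP_def by simp
  have dsym: "dist V E x y = dist V E y x" if xy: "x \<in> V" "y \<in> V" for x y
  proof -
    obtain w where "walk_betw V E y w x" using conn_walk[OF conn, of y x] xy by blast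
    then show ?thesis by (rule dist_sym[OF _ sym])
  qed
  have sep: "5 \<le> dist V E (s i) (s j)" if "i < k" "j < k" "i \<noteq> j" for i j
  proof (cases "i < j")
    case True then show ?thesis using sD that by auto
  next
    case False
    then have "j < i" using that by simp
    then have "5 \<le> dist V E (s j) (s i)" using sD that by auto
    moreover have "dist V E (s j) (s i) = dist V E (s i) (s j)" by (rule dsym) (use sV that in auto)
    ultimately show ?thesis by simp
  qed
  define par where "par j = (if 0 < j \<and> j < k then (SOME i. i < j \<and> dist V E (s i) (s j) = 5) else j - 1)" for j
  have parP: "par j < j \<and> dist V E (s (par j)) (s j) = 5" if "0 < j" "j < k" for j
  proof -
    have "\<exists>i. i < j \<and> dist V E (s i) (s j) = 5" using sE that by auto
    from someI_ex[OF this] show ?thesis unfolding par_def using that by simp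
  qed
  have par_lt: "\<forall>j. 0 < j \<longrightarrow> par j < j"
  proof (intro allI impI)
    fix j :: nat assume j0: "0 < j"
    show "par j < j"
    proof (cases "j < k")
      case True then show ?thesis using parP[OF j0] by blast
    next
      case False then show ?thesis unfolding par_def using j0 by simp
    qed
  qed
  have par5: "\<forall>j. 0 < j \<and> j < k \<longrightarrow> dist V E (s (par j)) (s j) = 5" using parP by blast
  define asg where "asg u = (SOME i. i < k \<and> (\<forall>j<k. dist V E (s i) u \<le> dist V E (s j) u))" for u
  have asgP: "asg u < k \<and> (\<forall>j<k. dist V E (s (asg u)) u \<le> dist V E (s j) u)" if u: "u \<in> V" for u
  proof -
    have "0 \<in> {..<k}" using k1 by simp
    then have ne: "(\<lambda>i. dist V E (s i) u) ` {..<k} \<noteq> {}" by blast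
    obtain i0 where i0: "i0 < k" "dist V E (s i0) u = Min ((\<lambda>i. dist V E (s i) u) ` {..<k})"
      using Min_in[OF _ ne] by auto
    have "\<forall>j<k. dist V E (s i0) u \<le> dist V E (s j) u" using i0 by auto
    then have "\<exists>i. i < k \<and> (\<forall>j<k. dist V E (s i) u \<le> dist V E (s j) u)" using i0 by blast
    from someI_ex[OF this] show ?thesis unfolding asg_def .
  qed
  have asg4: "dist V E (s (asg u)) u \<le> 4" if u: "u \<in> V" for u
  proof -
    obtain i where "i < k" "dist V E (s i) u \<le> 4" using cover u by blast
    then show ?thesis using asgP[OF u] by fastforce
  qed
  define c where "c i = real (card {u\<in>V. asg u = i})" for i
  have cball: "{u\<in>V. dist V E (s i) u \<le> 2} \<subseteq> {u\<in>V. asg u = i}" if i: "i < k" for i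
  proof
    fix u assume "u \<in> {u\<in>V. dist V E (s i) u \<le> 2}"
    then have u: "u \<in> V" "dist V E (s i) u \<le> 2" by auto
    have ju: "asg u < k" "dist V E (s (asg u)) u \<le> 2" using asgP[OF u(1)] u i by fastforce+
    have "asg u = i"
    proof (rule ccontr)
      assume ne: "asg u \<noteq> i"
      obtain w1 where w1: "walk_betw V E (s i) w1 u" using conn_walk[OF conn] sV i u by blast
      obtain w2 where w2: "walk_betw V E u w2 (s (asg u))" using conn_walk[OF conn] sV ju u by blast
      have "dist V E (s i) (s (asg u)) \<le> dist V E (s i) u + dist V E u (s (asg u))"
        by (rule dist_triangle[OF w1 w2])
      moreover have "dist V E u (s (asg u)) = dist V E (s (asg u)) u" using dsym sV ju u by metis
      ultimately have "dist V E (s i) (s (asg u)) \<le> 4" using u ju by linarith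
      then show False using sep[OF i ju(1)] ne by simp
    qed
    then show "u \<in> {u\<in>V. asg u = i}" using u by simp
  qed
  have cb: "\<forall>i<k. b \<le> c i"
  proof (intro allI impI)
    fix i assume i: "i < k"
    have "card {u\<in>V. dist V E (s i) u \<le> 2} \<le> card {u\<in>V. asg u = i}"
      by (rule card_mono) (use fin cball[OF i] in auto)
    then show "b \<le> c i" using ballb[of "s i"] sV i unfolding c_def by (meson of_nat_le_iff order_trans)
  qed
  have ca: "a \<le> c 0"
  proof -
    have "card {u\<in>V. dist V E (s 0) u \<le> 2} \<le> card {u\<in>V. asg u = 0}"
      by (rule card_mono) (use fin cball[of 0] k1 in auto)
    then show ?thesis using balla s0 unfolding c_def by (meson of_nat_le_iff order_trans)
  qed
  have asgk: "\<forall>u\<in>V. asg u < k" using asgP by blast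
  have sumc: "(\<Sum>i<k. c i) = real n"
    using group_sum[OF fin asgk, of "\<lambda>_. 1"] unfolding c_def n_def by simp
  define dT where "dT i j = dist {..<k} (Et par k) i j" for i j
  have Phi: "(\<Sum>i<k. \<Sum>j<k. c i * c j * real (dT i j)) \<le> Fn a b (real n)"
    using phi_bound[OF par_lt ca ab b1 k1 cb] sumc unfolding dT_def by simp
  have connT: "connected_graph {..<k} (Et par k)" by (rule tree_conn[OF par_lt k1])
  have dG: "dist V E (s i) (s j) \<le> 5 * dT i j" if ij: "i < k" "j < k" for i j
  proof -
    obtain w where "walk_betw {..<k} (Et par k) i w j" using conn_walk[OF connT, of i j] ij by auto
    from dist_witness[OF this] obtain q where q: "walk_betw {..<k} (Et par k) i q j" "length q = Suc (dT i j)"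
      unfolding dT_def by blast
    have "dist V E (s (hd q)) (s (last q)) \<le> 5 * (length q - 1)"
      using tree_to_graph[OF conn sym sV par5, of q] q(1) unfolding walk_betw_def by blast
    then show ?thesis using q unfolding walk_betw_def by simp
  qed
  have pb: "real (dist V E u w) \<le> 8 + 5 * real (dT (asg u) (asg w))" if u: "u \<in> V" and w: "w \<in> V" for u w
  proof -
    let ?i = "asg u" and ?j = "asg w"
    have ik: "?i < k" "?j < k" using asgk u w by auto
    have siV: "s ?i \<in> V" "s ?j \<in> V" using sV ik by auto
    obtain w1 where w1: "walk_betw V E u w1 (s ?i)" using conn_walk[OF conn u siV(1)] by blast
    obtain w2 where w2: "walk_betw V E (s ?i) w2 (s ?j)" using conn_walk[OF conn siV] by blast
    obtain w3 where w3: "walk_betw V E (s ?j) w3 w" using conn_walk[OF conn siV(2) w] by blast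
    obtain w4 where w4: "walk_betw V E (s ?i) w4 w" using conn_walk[OF conn siV(1) w] by blast
    have "dist V E u w \<le> dist V E u (s ?i) + dist V E (s ?i) w" by (rule dist_triangle[OF w1 w4])
    moreover have "dist V E (s ?i) w \<le> dist V E (s ?i) (s ?j) + dist V E (s ?j) w" by (rule dist_triangle[OF w2 w3])
    moreover have "dist V E u (s ?i) \<le> 4" using asg4[OF u] dsym[OF u siV(1)] by simp
    moreover have "dist V E (s ?j) w \<le> 4" using asg4[OF w] by simp
    moreover have "dist V E (s ?i) (s ?j) \<le> 5 * dT ?i ?j" by (rule dG[OF ik])
    ultimately have "dist V E u w \<le> 8 + 5 * dT ?i ?j" by linarith
    then have "real (dist V E u w) \<le> real (8 + 5 * dT ?i ?j)" by (simp only: of_nat_le_iff)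
    then show ?thesis by simp
  qed
  define P where "P = {(u, v). u \<in> V \<and> v \<in> V \<and> u \<noteq> v}"
  have PVV: "P \<subseteq> V \<times> V" unfolding P_def by auto
  have finP: "finite P" using PVV fin finite_subset by blast
  have cardP: "card P = n * (n - 1)"
  proof -
    have "P = V \<times> V - (\<lambda>v. (v, v)) ` V" unfolding P_def by auto
    moreover have "card ((\<lambda>v. (v, v)) ` V) = n" unfolding n_def by (rule card_image) (auto intro: inj_onI)
    moreover have "(\<lambda>v. (v, v)) ` V \<subseteq> V \<times> V" by auto
    ultimately have "card P = n * n - n" using fin unfolding n_def
      by (simp add: card_Diff_subset card_cartesian_product)
    then show ?thesis by (simp add: algebra_simps diff_mult_distrib2)
  qed
  define Phi where "Phi = (\<Sum>i<k. \<Sum>j<k. c i * c j * real (dT i j))"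
  have sumVV: "(\<Sum>(u, w)\<in>V \<times> V. real (dT (asg u) (asg w))) = Phi"
  proof -
    have "(\<Sum>(u, w)\<in>V \<times> V. real (dT (asg u) (asg w))) = (\<Sum>u\<in>V. \<Sum>w\<in>V. real (dT (asg u) (asg w)))"
      by (rule sum.cartesian_product[symmetric])
    also have "\<dots> = (\<Sum>u\<in>V. \<Sum>j<k. c j * real (dT (asg u) j))"
      by (intro sum.cong refl) (use group_sum[OF fin asgk] in \<open>simp add: c_def\<close>)
    also have "\<dots> = (\<Sum>i<k. c i * (\<Sum>j<k. c j * real (dT i j)))"
      using group_sum[OF fin asgk, of "\<lambda>i. \<Sum>j<k. c j * real (dT i j)"] unfolding c_def by simp
    also have "\<dots> = Phi" unfolding Phi_def by (simp add: sum_distrib_left mult.assoc)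
    finally show ?thesis .
  qed
  have Ssum: "(\<Sum>(u, v)\<in>P. real (dist V E u v)) \<le> 8 * real (n * (n - 1)) + 5 * Phi"
  proof -
    have "(\<Sum>(u, v)\<in>P. real (dist V E u v)) \<le> (\<Sum>(u, v)\<in>P. 8 + 5 * real (dT (asg u) (asg v)))"
      by (rule sum_mono) (use pb in \<open>auto simp: P_def\<close>)
    also have "\<dots> = 8 * real (card P) + 5 * (\<Sum>(u, v)\<in>P. real (dT (asg u) (asg v)))"
      by (simp add: sum.distrib sum_distrib_left case_prod_beta)
    also have "(\<Sum>(u, v)\<in>P. real (dT (asg u) (asg v))) \<le> (\<Sum>(u, v)\<in>V \<times> V. real (dT (asg u) (asg v)))"
      by (rule sum_mono2) (use fin PVV in auto)
    finally show ?thesis using sumVV cardP by simp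
  qed
  have nR: "2 \<le> real n" using n2 unfolding n_def by simp
  have nn: "0 < real n * (real n - 1)" using nR by simp
  have ch: "real (n choose 2) = real n * (real n - 1) / 2"
  proof -
    have "even (n * (n - 1))" by (cases "even n") auto
    then have "real (n * (n - 1) div 2) = real (n * (n - 1)) / 2" by (simp add: real_of_nat_div)
    then show ?thesis using n2 unfolding n_def by (simp add: choose_two of_nat_diff)
  qed
  have wi: "wiener V E = (\<Sum>(u, v)\<in>P. real (dist V E u v)) / 2" unfolding wiener_def P_def by simp
  have nn1: "real (n * (n - 1)) = real n * (real n - 1)" using n2 unfolding n_def by (simp add: of_nat_diff)
  have "avg_dist V E = (\<Sum>(u, v)\<in>P. real (dist V E u v)) / (real n * (real n - 1))"
    unfolding avg_dist_def wi n_def[symmetric] ch by (simp add: field_simps)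
  also have "\<dots> \<le> (8 * (real n * (real n - 1)) + 5 * Fn a b (real n)) / (real n * (real n - 1))"
  proof (rule divide_right_mono)
    show "(\<Sum>(u, v)\<in>P. real (dist V E u v)) \<le> 8 * (real n * (real n - 1)) + 5 * Fn a b (real n)"
      using Ssum Phi nn1 unfolding Phi_def by linarith
  qed (use nn in simp)
  also have "\<dots> = 5 / 3 * ((real n - a + b) * (real n - a + b - 1) / (real n * (real n - 1)))
                               * ((real n + 2 * a) / b) + 8"
  proof -
    let ?D = "real n * (real n - 1)"
    have n0: "real n \<noteq> 0" "real n - 1 \<noteq> 0" using nR by auto
    have b0: "b \<noteq> 0" using b1 by auto
    have "(8 * ?D + 5 * Fn a b (real n)) / ?D = 8 + 5 * Fn a b (real n) / ?D"
      using n0 by (simp add: add_divide_distrib)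
    moreover have "5 * Fn a b (real n) / ?D = 5 / 3 * ((real n - a + b) * (real n - a + b - 1) / ?D)
                               * ((real n + 2 * a) / b)"
      unfolding Fn_def using n0 b0 by (simp add: field_simps)
    ultimately show ?thesis by simp
  qed
  finally show ?thesis unfolding Let_def n_def[symmetric] \<delta>_def[symmetric] \<Delta>_def[symmetric]
    a_def[symmetric] b_def[symmetric] .
qed

end
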